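(* For $\lambda \in \mathbb{R}$, let $\mu_\lambda$ be the exponentially tilted Sato--Tate measure \[ \mu_\lambda(d\theta) = \frac{1}{Z(\lambda)} \sin^2\theta\, e^{\lambda\cos\theta}\, d\theta \quad \text{on } [0,\pi], \] with $Z(\lambda)$ the normalizing constant. Then $\operatorname{Cov}_{\mu_\lambda}(\cos\theta, \cos 2\theta)$ is strictly positive for all $\lambda > 0$ and strictly negative for all $\lambda < 0$. Equivalently, under the tilted semicircle measure $\mu_\lambda(dx) \propto \sqrt{1-x^2}\, e^{\lambda x}\,dx$ on $[-1,1]$, the function $\lambda \mapsto \mathbb{E}_\lambda[x^2]$ is strictly increasing in $\lambda$. *)

theory Defs
  imports "HOL-Analysis.Analysis"
begin

definition st_weight :: "real \<Rightarrow> real \<Rightarrow> real" where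
  "st_weight l \<theta> = (sin \<theta>)\<^sup>2 * exp (l * cos \<theta>)"

definition st_Z :: "real \<Rightarrow> real" where
  "st_Z l = integral {0..pi} (st_weight l)"

definition st_E :: "real \<Rightarrow> (real \<Rightarrow> real) \<Rightarrow> real" where
  "st_E l f = integral {0..pi} (\<lambda>\<theta>. f \<theta> * st_weight l \<theta>) / st_Z l"

definition st_Cov :: "real \<Rightarrow> (real \<Rightarrow> real) \<Rightarrow> (real \<Rightarrow> real) \<Rightarrow> real" where
  "st_Cov l f g = st_E l (\<lambda>\<theta>. f \<theta> * g \<theta>) - st_E l f * st_E l g"

end

theory Submission imports Defs begin

lemma int_pos:
  fixes h :: "real \<Rightarrow> real"
  assumes c: "continuous_on {0..pi} h" and nn: "\<And>x. x \<in> {0..pi} \<Longrightarrow> 0 \<le> h x"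
    and x0: "x0 \<in> {0..pi}" and p: "h x0 > 0"
  shows "integral {0..pi} h > 0"
proof -
  have ge: "integral {0..pi} h \<ge> 0"
    by (rule integral_nonneg) (use integrable_continuous_real[OF c] nn in auto)
  have "integral {0..pi} h \<noteq> 0"
  proof
    assume z: "integral {0..pi} h = 0"
    have "(h has_integral 0) (cbox 0 pi)"
      using integrable_integral[OF integrable_continuous_real[OF c]] z by simp
    then have "h x0 = 0"
      using has_integral_0_cbox_imp_0[of 0 pi h x0] c nn x0 pi_gt_zero by auto
    with p show False by simp
  qed
  with ge show ?thesis by simp
qed

lemma int_refl:
  fixes f :: "real \<Rightarrow> real"
  shows "integral {0..pi} (\<lambda>x. f (pi - x)) = integral {0..pi} f"
proof -
  have "integral {-pi..-0} (\<lambda>x. f (-x)) = integral {0..pi} f" using Henstock_Kurzweil_Integration.integral_reflect_real[of pi 0 f] by simp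
  moreover have "integral {0..pi} (\<lambda>x. f (pi - x)) = integral {-pi..-0} (\<lambda>x. f (-x))"
  proof -
    have "integral {-pi-(-pi)..0-(-pi)} (\<lambda>x. (\<lambda>y. f (-y)) (x + (-pi))) = integral {-pi..0} (\<lambda>y. f (-y))"
      by (rule integral_shift_real_ivl)
    then show ?thesis by simp
  qed
  ultimately show ?thesis by simp
qed


definition F :: "real \<Rightarrow> nat \<Rightarrow> real \<Rightarrow> real" where
  "F l k x = cos x ^ k * exp (l * cos x) * sin x ^ 2"
definition FA :: "real \<Rightarrow> nat \<Rightarrow> real \<Rightarrow> real" where
  "FA l k x = cos x ^ k * cosh (l * cos x) * sin x ^ 2"
definition FB :: "real \<Rightarrow> nat \<Rightarrow> real \<Rightarrow> real" where
  "FB l k x = cos x ^ k * sinh (l * cos x) * sin x ^ 2"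
definition M :: "real \<Rightarrow> nat \<Rightarrow> real" where "M l k = integral {0..pi} (F l k)"
definition A :: "real \<Rightarrow> nat \<Rightarrow> real" where "A l k = integral {0..pi} (FA l k)"
definition B :: "real \<Rightarrow> nat \<Rightarrow> real" where "B l k = integral {0..pi} (FB l k)"

lemma cont_F: "continuous_on {0..pi} (F l k)" unfolding F_def by (intro continuous_intros)
lemma cont_FA: "continuous_on {0..pi} (FA l k)" unfolding FA_def by (intro continuous_intros)
lemma cont_FB: "continuous_on {0..pi} (FB l k)" unfolding FB_def by (intro continuous_intros)
lemma int_F: "F l k integrable_on {0..pi}" by (rule integrable_continuous_real[OF cont_F])
lemma int_FA: "FA l k integrable_on {0..pi}" by (rule integrable_continuous_real[OF cont_FA])
lemma int_FB: "FB l k integrable_on {0..pi}" by (rule integrable_continuous_real[OF cont_FB])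

lemma M_AB: "M l k = A l k + B l k"
proof -
  have "F l k = (\<lambda>x. FA l k x + FB l k x)"
    by (auto simp: F_def FA_def FB_def algebra_simps fun_eq_iff cosh_plus_sinh[symmetric])
  then show ?thesis unfolding M_def A_def B_def using integral_add[OF int_FA int_FB] by simp
qed

lemma A_odd: assumes "odd k" shows "A l k = 0"
proof -
  have "(\<lambda>x. FA l k (pi - x)) = (\<lambda>x. - FA l k x)"
    using assms by (auto simp: FA_def fun_eq_iff)
  then have "A l k = - A l k" unfolding A_def using int_refl[of "FA l k"] by simp
  then show ?thesis by simp
qed

lemma B_even: assumes "even k" shows "B l k = 0"
proof -
  have "(\<lambda>x. FB l k (pi - x)) = (\<lambda>x. - FB l k x)"
    using assms by (auto simp: FB_def fun_eq_iff)
  then have "B l k = - B l k" unfolding B_def using int_refl[of "FB l k"] by simp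
  then show ?thesis by simp
qed

lemma A_neg: "A (-l) k = A l k"
  unfolding A_def FA_def by simp

lemma B_neg: "B (-l) k = - B l k"
proof -
  have "FB (-l) k = (\<lambda>x. - FB l k x)" by (auto simp: FB_def fun_eq_iff)
  then show ?thesis unfolding B_def by simp
qed


lemma key_pw:
  fixes l s t :: real
  assumes l: "l > 0" and s: "s \<ge> 0"
  shows "(t\<^sup>2 - s\<^sup>2) * (t * tanh (l * t) - s * tanh (l * s)) \<ge> 0"
proof -
  have e: "t * tanh (l * t) = \<bar>t\<bar> * tanh (l * \<bar>t\<bar>)"
    by (cases "t \<ge> 0") auto
  have t2: "t\<^sup>2 = \<bar>t\<bar>\<^sup>2" by simp
  show ?thesis
  proof (cases "\<bar>t\<bar> \<ge> s")
    case True
    have "t\<^sup>2 - s\<^sup>2 \<ge> 0" using True s t2 by (metis diff_ge_0_iff_ge power_mono)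
    moreover have "s * tanh (l * s) \<le> \<bar>t\<bar> * tanh (l * \<bar>t\<bar>)"
      by (rule mult_mono) (use True s l in \<open>auto intro: mult_left_mono\<close>)
    ultimately show ?thesis using e by simp
  next
    case False
    have "t\<^sup>2 - s\<^sup>2 \<le> 0" using False s t2
      by (metis abs_ge_zero diff_le_0_iff_le less_eq_real_def not_le power_mono)
    moreover have "\<bar>t\<bar> * tanh (l * \<bar>t\<bar>) \<le> s * tanh (l * s)"
      by (rule mult_mono) (use False s l in \<open>auto intro: mult_left_mono\<close>)
    ultimately show ?thesis using e by (simp add: mult_nonpos_nonpos)
  qed
qed

lemma D_pos:
  assumes l: "l > 0"
  shows "A l 0 * B l 3 - B l 1 * A l 2 > 0"
proof -
  have p2: "pi/2 \<in> {0..pi}" "pi/4 \<in> {0..pi}" using pi_gt_zero by auto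
  have A0: "A l 0 > 0" unfolding A_def
    by (rule int_pos[OF cont_FA _ p2(1)]) (auto simp: FA_def)
  have c4: "cos (pi/4) > 0" "sin (pi/4) > 0" by (auto intro!: cos_gt_zero sin_gt_zero)
  have A2: "A l 2 > 0" unfolding A_def
    by (rule int_pos[OF cont_FA _ p2(2)]) (use c4 in \<open>auto simp: FA_def\<close>)
  define m where "m = A l 2 / A l 0"
  have m: "m > 0" using A0 A2 by (simp add: m_def)
  define s where "s = sqrt m"
  have s: "s > 0" "s\<^sup>2 = m" using m by (auto simp: s_def)
  define g where "g = s * tanh (l * s)"
  have g: "g > 0" using s l by (simp add: g_def)
  define H where "H x = (cos x ^ 2 - m) * (cos x * sinh (l * cos x) - g * cosh (l * cos x)) * sin x ^ 2" for x
  have Heq: "H x = FB l 3 x - m * FB l 1 x - g * FA l 2 x + (g * m) * FA l 0 x" for x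
    by (simp add: H_def FA_def FB_def algebra_simps power2_eq_square power3_eq_cube)
  have "(H has_integral (B l 3 - m * B l 1 - g * A l 2 + (g * m) * A l 0)) {0..pi}"
    unfolding Heq A_def B_def
    by (intro has_integral_add has_integral_diff has_integral_mult_right integrable_integral int_FA int_FB)
  moreover have "g * m * A l 0 = g * A l 2" using A0 by (simp add: m_def)
  ultimately have HI: "integral {0..pi} H = B l 3 - m * B l 1"
    by (simp add: integral_unique)
  have Hnn: "0 \<le> H x" for x
  proof -
    have sh: "sinh (l * cos x) = tanh (l * cos x) * cosh (l * cos x)"
      by (simp add: tanh_def)
    have "H x = ((cos x ^ 2 - s\<^sup>2) * (cos x * tanh (l * cos x) - s * tanh (l * s))) * (cosh (l * cos x) * sin x ^ 2)"
      unfolding H_def sh g_def s(2) by (simp add: algebra_simps)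
    moreover have "0 \<le> (cos x ^ 2 - s\<^sup>2) * (cos x * tanh (l * cos x) - s * tanh (l * s))"
      using key_pw[OF l, of s "cos x"] s by simp
    moreover have "0 \<le> cosh (l * cos x) * sin x ^ 2"
      by (simp add: less_imp_le)
    ultimately show ?thesis by simp
  qed
  have Hc: "continuous_on {0..pi} H" unfolding H_def by (intro continuous_intros)
  have "integral {0..pi} H > 0"
    by (rule int_pos[OF Hc _ p2(1)]) (use Hnn m g in \<open>auto simp: H_def\<close>)
  then have "B l 3 - m * B l 1 > 0" using HI by simp
  then have "A l 0 * (B l 3 - m * B l 1) > 0" using A0 by simp
  moreover have "A l 0 * (B l 3 - m * B l 1) = A l 0 * B l 3 - B l 1 * A l 2"
    using A0 by (simp add: m_def algebra_simps)
  ultimately show ?thesis by simp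
qed


lemma A0_pos: "A l 0 > 0"
proof -
  have p2: "pi/2 \<in> {0..pi}" using pi_gt_zero by auto
  show ?thesis unfolding A_def
    by (rule int_pos[OF cont_FA _ p2]) (auto simp: FA_def)
qed

lemma Fk_int:
  assumes "\<And>x. f x * st_weight l x = (\<Sum>k\<le>3. c k * F l k x)"
  shows "integral {0..pi} (\<lambda>x. f x * st_weight l x) = (\<Sum>k\<le>3. c k * M l k)"
proof -
  have "((\<lambda>x. \<Sum>k\<le>3. c k * F l k x) has_integral (\<Sum>k\<le>3. c k * M l k)) {0..pi}"
    unfolding M_def by (intro has_integral_sum has_integral_mult_right integrable_integral int_F) auto
  then show ?thesis using assms by (simp add: integral_unique)
qed

lemma Cov_eq:
  "st_Cov l cos (\<lambda>\<theta>. cos (2 * \<theta>)) = 2 * (A l 0 * B l 3 - B l 1 * A l 2) / (A l 0)\<^sup>2"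
proof -
  have Z: "st_Z l = M l 0"
    unfolding st_Z_def M_def by (rule arg_cong[where f="integral _"]) (auto simp: F_def st_weight_def fun_eq_iff)
  have c2: "cos (2 * x) = 2 * cos x ^ 2 - 1" for x :: real by (simp add: cos_double_cos)
  have I1: "integral {0..pi} (\<lambda>x. cos x * st_weight l x) = M l 1"
    using Fk_int[of cos l "\<lambda>k. if k = 1 then 1 else 0"]
    by (simp add: F_def st_weight_def eval_nat_numeral if_distrib cong: if_cong)
  have I2: "integral {0..pi} (\<lambda>x. cos (2 * x) * st_weight l x) = 2 * M l 2 - M l 0"
  proof -
    have h: "cos (2 * x) * st_weight l x = (\<Sum>k\<le>3. (\<lambda>k. if k = 2 then 2 else if k = 0 then -1 else 0) k * F l k x)" for x
      unfolding c2 by (simp add: F_def st_weight_def eval_nat_numeral algebra_simps)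
    from Fk_int[OF h] show ?thesis by (simp add: eval_nat_numeral)
  qed
  have I3: "integral {0..pi} (\<lambda>x. cos x * cos (2 * x) * st_weight l x) = 2 * M l 3 - M l 1"
  proof -
    have h: "cos x * cos (2 * x) * st_weight l x = (\<Sum>k\<le>3. (\<lambda>k. if k = 3 then 2 else if k = 1 then -1 else 0) k * F l k x)" for x
      unfolding c2 by (simp add: F_def st_weight_def eval_nat_numeral algebra_simps)
    from Fk_int[OF h] show ?thesis by (simp add: eval_nat_numeral)
  qed
  have M: "M l 0 = A l 0" "M l 1 = B l 1" "M l 2 = A l 2" "M l 3 = B l 3"
    by (simp_all add: M_AB A_odd B_even)
  have A0: "A l 0 \<noteq> 0" using A0_pos[of l] by simp
  show ?thesis
    unfolding st_Cov_def st_E_def Z I1 I2 I3 M using A0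
    by (simp add: field_simps power2_eq_square)
qed

theorem theoremB:
  shows "(\<forall>l::real. l > 0 \<longrightarrow> st_Cov l cos (\<lambda>\<theta>. cos (2 * \<theta>)) > 0) \<and>
         (\<forall>l::real. l < 0 \<longrightarrow> st_Cov l cos (\<lambda>\<theta>. cos (2 * \<theta>)) < 0)"
proof safe
  fix l :: real assume l: "l > 0"
  show "st_Cov l cos (\<lambda>\<theta>. cos (2 * \<theta>)) > 0"
    unfolding Cov_eq using D_pos[OF l] A0_pos[of l] by simp
next
  fix l :: real assume l: "l < 0"
  have "A (-l) 0 * B (-l) 3 - B (-l) 1 * A (-l) 2 > 0" using D_pos[of "-l"] l by simp
  then have "A l 0 * B l 3 - B l 1 * A l 2 < 0" by (simp add: A_neg B_neg)
  then show "st_Cov l cos (\<lambda>\<theta>. cos (2 * \<theta>)) < 0"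
    unfolding Cov_eq using A0_pos[of l] by (simp add: divide_neg_pos)
qed

end
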